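(* For every $\Delta \ge 1$ there is a local algorithm, using only a port numbering (no unique identifiers), that on every weakly $2$-coloured graph $\mathcal{G}=(V,E)$ without isolated nodes and of maximum degree at most $\Delta$ outputs a dominating set $D$ with $|D| \le |V|/2$ and hence $|D| \le \tfrac{\Delta+1}{2}|D^*|$, where $D^*$ is a minimum dominating set of $\mathcal{G}$.
   Context: Model: a graph $\mathcal{G}=(V,E)$ without isolated nodes is a distributed system; every node runs the same deterministic algorithm. Communication is synchronous: in each round every node receives messages from its neighbours, performs local computation, and sends messages to its neighbours. Each node knows its degree, its own input label (e.g. its colour), and the global degree bound $\Delta$. A local algorithm is one that terminates after $T$ rounds, where $T$ may depend on $\Delta$ but not on the number of nodes; its output at a node is whether the node belongs to the solution. A port numbering means each node has a fixed ordering of its incident edges, known to it; nodes have no identifiers. A weak $2$-colouring assigns each node black or white so that every non-isolated node has at least one neighbour of the opposite colour; it is given as input. *)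

theory Defs
  imports Complex_Main
begin

text \<open>Nodes are natural numbers (every finite graph is
isomorphic to one on nat; nodes never see these names). deg v is the degree of v,
and port i < deg v of node v is connected to port j of node u, where p v i = (u, j).\<close>

definition port_graph :: "nat set \<Rightarrow> (nat \<Rightarrow> nat) \<Rightarrow> (nat \<Rightarrow> nat \<Rightarrow> nat \<times> nat) \<Rightarrow> bool" where
  "port_graph V deg p \<longleftrightarrow> finite V \<and>
     (\<forall>v\<in>V. \<forall>i<deg v. fst (p v i) \<in> V \<and> snd (p v i) < deg (fst (p v i)) \<and>
                        p (fst (p v i)) (snd (p v i)) = (v, i) \<and> fst (p v i) \<noteq> v) \<and>
     (\<forall>v\<in>V. \<forall>i<deg v. \<forall>i'<deg v. fst (p v i) = fst (p v i') \<longrightarrow> i = i')"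

definition adj :: "nat set \<Rightarrow> (nat \<Rightarrow> nat) \<Rightarrow> (nat \<Rightarrow> nat \<Rightarrow> nat \<times> nat) \<Rightarrow> nat \<Rightarrow> nat \<Rightarrow> bool" where
  "adj V deg p v u \<longleftrightarrow> v \<in> V \<and> (\<exists>i<deg v. fst (p v i) = u)"

definition no_isolated :: "nat set \<Rightarrow> (nat \<Rightarrow> nat) \<Rightarrow> bool" where
  "no_isolated V deg \<longleftrightarrow> (\<forall>v\<in>V. deg v \<ge> 1)"

definition max_degree_le :: "nat set \<Rightarrow> (nat \<Rightarrow> nat) \<Rightarrow> nat \<Rightarrow> bool" where
  "max_degree_le V deg \<Delta> \<longleftrightarrow> (\<forall>v\<in>V. deg v \<le> \<Delta>)"

text \<open>Weak 2-colouring (True = black, False = white).\<close>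
definition weak_2_colouring :: "nat set \<Rightarrow> (nat \<Rightarrow> nat) \<Rightarrow> (nat \<Rightarrow> nat \<Rightarrow> nat \<times> nat) \<Rightarrow> (nat \<Rightarrow> bool) \<Rightarrow> bool" where
  "weak_2_colouring V deg p col \<longleftrightarrow>
     (\<forall>v\<in>V. (\<exists>u. adj V deg p v u) \<longrightarrow> (\<exists>u. adj V deg p v u \<and> col u \<noteq> col v))"

definition dominating :: "nat set \<Rightarrow> (nat \<Rightarrow> nat) \<Rightarrow> (nat \<Rightarrow> nat \<Rightarrow> nat \<times> nat) \<Rightarrow> nat set \<Rightarrow> bool" where
  "dominating V deg p D \<longleftrightarrow> D \<subseteq> V \<and> (\<forall>v\<in>V. v \<in> D \<or> (\<exists>u\<in>D. adj V deg p v u))"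

definition min_dominating :: "nat set \<Rightarrow> (nat \<Rightarrow> nat) \<Rightarrow> (nat \<Rightarrow> nat \<Rightarrow> nat \<times> nat) \<Rightarrow> nat set \<Rightarrow> bool" where
  "min_dominating V deg p D \<longleftrightarrow> dominating V deg p D \<and>
     (\<forall>D'. dominating V deg p D' \<longrightarrow> card D \<le> card D')"

text \<open>Local states and messages are natural numbers (any finite data can be encoded).
The initial state depends only on the node's degree and its input colour;
in each round a node sends msg s i on port i, receives the list of messages
indexed by its ports and updates its state; after rounds rounds it outputs.\<close>
record pn_alg =
  init :: "nat \<Rightarrow> bool \<Rightarrow> nat"
  msg :: "nat \<Rightarrow> nat \<Rightarrow> nat"
  step :: "nat \<Rightarrow> nat list \<Rightarrow> nat"
  out :: "nat \<Rightarrow> bool"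
  rounds :: nat

primrec run_state :: "pn_alg \<Rightarrow> (nat \<Rightarrow> nat) \<Rightarrow> (nat \<Rightarrow> nat \<Rightarrow> nat \<times> nat) \<Rightarrow> (nat \<Rightarrow> bool) \<Rightarrow> nat \<Rightarrow> nat \<Rightarrow> nat" where
  "run_state A deg p col 0 v = init A (deg v) (col v)"
| "run_state A deg p col (Suc t) v =
     step A (run_state A deg p col t v)
       (map (\<lambda>i. msg A (run_state A deg p col t (fst (p v i))) (snd (p v i))) [0..<deg v])"

definition alg_output :: "pn_alg \<Rightarrow> nat set \<Rightarrow> (nat \<Rightarrow> nat) \<Rightarrow> (nat \<Rightarrow> nat \<Rightarrow> nat \<times> nat) \<Rightarrow> (nat \<Rightarrow> bool) \<Rightarrow> nat set" where
  "alg_output A V deg p col = {v \<in> V. out A (run_state A deg p col (rounds A) v)}"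

end

theory Submission
  imports Defs "HOL-Library.Nat_Bijection"
begin


definition b2n :: "bool \<Rightarrow> nat" where "b2n b = (if b then 1 else 0)"
definition Lh :: "nat \<Rightarrow> nat list \<Rightarrow> nat list" where "Lh k h = list_decode (h ! (k+2))"
definition fpH :: "nat list \<Rightarrow> nat" where "fpH h = (LEAST i. i < h!0 \<and> Lh 0 h ! i \<noteq> h!1)"
definition n1H :: "nat list \<Rightarrow> nat" where "n1H h = sum_list (Lh 1 h)"
definition kH :: "nat list \<Rightarrow> nat" where "kH h = sum_list (Lh 2 h)"
definition n2H :: "nat list \<Rightarrow> nat" where "n2H h = sum_list (Lh 3 h)"
definition decH :: "nat list \<Rightarrow> bool" where "decH h = (n1H h \<le> Suc (n2H h))"

definition G :: "nat list \<Rightarrow> nat \<Rightarrow> nat" where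
 "G h j = (if length h = 2 then h!1
 else if length h = 3 then (if h!1 = 0 \<and> j = fpH h then 1 else 0)
 else if length h = 4 then (if h!1 = 1 \<and> n1H h = 0 \<and> j = fpH h then 1 else 0)
 else if length h = 5 then (if h!1 = 0 \<and> j = fpH h then kH h else 0)
 else if length h = 6 then (if h!1 = 1 \<and> 0 < n1H h then (if decH h then 1 else 2) else 0)
 else if length h = 7 then (if h!1 = 0 then Lh 4 h ! fpH h else 0)
 else 0)"

definition outH :: "nat list \<Rightarrow> bool" where
 "outH h = (if h!1 = 1 then (if 0 < n1H h then \<not> decH h else Lh 5 h ! fpH h = 2) else Lh 4 h ! fpH h = 1)"

definition alg :: pn_alg where
 "alg = \<lparr>init = \<lambda>d c. list_encode [d, b2n c], msg = \<lambda>s j. G (list_decode s) j,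
         step = \<lambda>s ms. list_encode (list_decode s @ [list_encode ms]),
         out = \<lambda>s. outH (list_decode s), rounds = 6\<rparr>"

primrec hist :: "(nat\<Rightarrow>nat) \<Rightarrow> (nat \<Rightarrow> nat \<Rightarrow> nat\<times>nat) \<Rightarrow> (nat\<Rightarrow>bool) \<Rightarrow> nat \<Rightarrow> nat \<Rightarrow> nat list" where
  "hist deg p col 0 v = [deg v, b2n (col v)]"
| "hist deg p col (Suc t) v = hist deg p col t v @
     [list_encode (map (\<lambda>i. G (hist deg p col t (fst (p v i))) (snd (p v i))) [0..<deg v])]"

lemma run_hist: "run_state alg deg p col t v = list_encode (hist deg p col t v)"
  by (induction t arbitrary: v) (simp_all add: alg_def)

lemma hist_len[simp]: "length (hist deg p col t v) = t + 2"
  by (induction t) auto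

lemma hist_0[simp]: "hist deg p col t v ! 0 = deg v"
  by (induction t) (auto simp: nth_append)

lemma hist_1[simp]: "hist deg p col t v ! 1 = b2n (col v)"
  by (induction t) (auto simp: nth_append)

lemma hist_msg: "k < t \<Longrightarrow> Lh k (hist deg p col t v) =
   map (\<lambda>i. G (hist deg p col k (fst (p v i))) (snd (p v i))) [0..<deg v]"
proof (induction t)
  case 0 then show ?case by simp
next
  case (Suc t)
  show ?case
  proof (cases "k < t")
    case True
    then show ?thesis using Suc by (auto simp: Lh_def nth_append)
  next
    case False
    then have "k = t" using Suc by simp
    then show ?thesis by (simp add: Lh_def nth_append)
  qed
qed

lemma sum_list_if: "sum_list (map (\<lambda>i. if P i then f i else 0) [0..<n]) = (\<Sum>i\<in>{i. i<n \<and> P i}. (f i :: nat))"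
proof -
  have "sum_list (map (\<lambda>i. if P i then f i else 0) [0..<n]) = (\<Sum>i\<in>{0..<n}. if P i then f i else 0)"
    by (metis atLeastLessThan_upt sum_set_upt_conv_sum_list_nat)
  also have "\<dots> = (\<Sum>i\<in>{0..<n} \<inter> {i. P i}. f i)" by (simp add: sum.inter_restrict)
  also have "{0..<n} \<inter> {i. P i} = {i. i<n \<and> P i}" by auto
  finally show ?thesis .
qed

lemma b2n_eq[simp]: "(b2n x = b2n y) = (x = y)" "b2n x = 0 \<longleftrightarrow> \<not> x" "b2n x = 1 \<longleftrightarrow> x"
  by (auto simp: b2n_def)




declare hist.simps[simp del]
lemma hist_1'[simp]: "hist deg p col t v ! Suc 0 = b2n (col v)"
  using hist_1 by simp
declare b2n_def[simp]

locale S =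
  fixes V :: "nat set" and deg :: "nat \<Rightarrow> nat" and p :: "nat \<Rightarrow> nat \<Rightarrow> nat \<times> nat" and col :: "nat \<Rightarrow> bool"
begin

abbreviation nb where "nb v i \<equiv> fst (p v i)"
abbreviation bp where "bp v i \<equiv> snd (p v i)"
abbreviation h where "h t v \<equiv> hist deg p col t v"

definition fp where "fp v = (LEAST i. i < deg v \<and> col (nb v i) \<noteq> col v)"
definition P1 where "P1 u i \<longleftrightarrow> \<not> col (nb u i) \<and> bp u i = fp (nb u i)"
definition n1 where "n1 u = card {i. i < deg u \<and> P1 u i}"
definition kk where "kk w = card {i. i < deg w \<and> col (nb w i) \<and> n1 (nb w i) = 0 \<and> bp w i = fp (nb w i)}"
definition n2 where "n2 c = (\<Sum>i\<in>{i. i < deg c \<and> P1 c i}. kk (nb c i))"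
definition dec where "dec c \<longleftrightarrow> n1 c \<le> Suc (n2 c)"
definition E where "E c = (if col c \<and> 0 < n1 c then (if dec c then 1 else 2) else (0::nat))"

lemma L0: "0 < t \<Longrightarrow> Lh 0 (h t v) = map (\<lambda>i. b2n (col (nb v i))) [0..<deg v]"
  by (simp add: hist_msg G_def)

lemma fpH_eq: "0 < t \<Longrightarrow> fpH (h t v) = fp v"
  unfolding fpH_def fp_def using L0[of t v]
  by (intro arg_cong[where f=Least] ext) (auto split: if_splits)

lemma n1H_eq: "1 < t \<Longrightarrow> n1H (h t v) = n1 v"
proof -
  assume t: "1 < t"
  have "Lh 1 (h t v) = map (\<lambda>i. if P1 v i then 1 else 0) [0..<deg v]"
    using t by (auto simp: hist_msg G_def fpH_eq P1_def)
  then show ?thesis unfolding n1H_def n1_def by (simp add: sum_list_if)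
qed

lemma kH_eq: "2 < t \<Longrightarrow> kH (h t v) = kk v"
proof -
  assume t: "2 < t"
  have "Lh 2 (h t v) = map (\<lambda>i. if col (nb v i) \<and> n1 (nb v i) = 0 \<and> bp v i = fp (nb v i) then 1 else 0) [0..<deg v]"
    using t by (auto simp: hist_msg G_def fpH_eq n1H_eq)
  then show ?thesis unfolding kH_def kk_def by (simp add: sum_list_if)
qed

lemma n2H_eq: "3 < t \<Longrightarrow> n2H (h t v) = n2 v"
proof -
  assume t: "3 < t"
  have "Lh 3 (h t v) = map (\<lambda>i. if P1 v i then kk (nb v i) else 0) [0..<deg v]"
    using t by (auto simp: hist_msg G_def fpH_eq kH_eq P1_def)
  then show ?thesis unfolding n2H_def n2_def by (simp add: sum_list_if)
qed

lemma L4: "4 < t \<Longrightarrow> Lh 4 (h t v) = map (\<lambda>i. E (nb v i)) [0..<deg v]"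
  by (auto simp: hist_msg G_def n1H_eq decH_def n2H_eq E_def dec_def)

lemma L5: "fp v < deg v \<Longrightarrow> fp (nb v (fp v)) < deg (nb v (fp v)) \<Longrightarrow>
  Lh 5 (h 6 v) ! fp v = (if \<not> col (nb v (fp v)) then E (nb (nb v (fp v)) (fp (nb v (fp v)))) else 0)"
  by (auto simp: hist_msg G_def fpH_eq L4 n1H_eq decH_def n2H_eq dec_def E_def)

definition inD where
  "inD v = (if col v then (if 0 < n1 v then \<not> dec v else
      (if \<not> col (nb v (fp v)) then E (nb (nb v (fp v)) (fp (nb v (fp v)))) else 0) = 2)
     else E (nb v (fp v)) = 1)"

lemma out_eq: "fp v < deg v \<Longrightarrow> fp (nb v (fp v)) < deg (nb v (fp v)) \<Longrightarrow>
   outH (h 6 v) = inD v"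
  unfolding outH_def inD_def
  by (simp add: n1H_eq decH_def n2H_eq dec_def fpH_eq L5 L4)

end



locale S2 = S +
  assumes pg: "port_graph V deg p" and ni: "no_isolated V deg" and wc: "weak_2_colouring V deg p col"
begin

lemma finV: "finite V" using pg by (simp add: port_graph_def)

lemma nbV: "v \<in> V \<Longrightarrow> i < deg v \<Longrightarrow> nb v i \<in> V \<and> bp v i < deg (nb v i) \<and> p (nb v i) (bp v i) = (v, i)"
  using pg by (simp add: port_graph_def)

lemma nb_back: "v \<in> V \<Longrightarrow> i < deg v \<Longrightarrow> nb (nb v i) (bp v i) = v"
  using nbV by simp
lemma bp_back: "v \<in> V \<Longrightarrow> i < deg v \<Longrightarrow> bp (nb v i) (bp v i) = i"
  using nbV by simp

lemma portinj: "v \<in> V \<Longrightarrow> i < deg v \<Longrightarrow> i' < deg v \<Longrightarrow> nb v i = nb v i' \<Longrightarrow> i = i'"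
  using pg by (simp add: port_graph_def)

lemma adjI: "v \<in> V \<Longrightarrow> i < deg v \<Longrightarrow> adj V deg p v (nb v i)"
  by (auto simp: adj_def)

lemma fp_ok: assumes "v \<in> V" shows "fp v < deg v \<and> col (nb v (fp v)) \<noteq> col v"
proof -
  have "deg v \<ge> 1" using ni assms by (simp add: no_isolated_def)
  then have "\<exists>u. adj V deg p v u" using adjI[OF assms, of 0] by auto
  then obtain u where "adj V deg p v u" "col u \<noteq> col v" using wc assms by (auto simp: weak_2_colouring_def)
  then obtain i where "i < deg v \<and> col (nb v i) \<noteq> col v" by (auto simp: adj_def)
  then show ?thesis unfolding fp_def by (rule LeastI)
qed

lemma fp_lt: "v \<in> V \<Longrightarrow> fp v < deg v" using fp_ok by blast
lemma fp_col: "v \<in> V \<Longrightarrow> col (nb v (fp v)) \<longleftrightarrow> \<not> col v" using fp_ok by blast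
lemma fpV: "v \<in> V \<Longrightarrow> nb v (fp v) \<in> V" using fp_lt nbV by blast

definition Cs where "Cs = {c \<in> V. col c \<and> 0 < n1 c}"
definition cen where "cen v = (if col v then (if 0 < n1 v then v else nb (nb v (fp v)) (fp (nb v (fp v)))) else nb v (fp v))"

lemma A1_fin: "finite {i. i < deg u \<and> P1 u i}" by (rule finite_subset[of _ "{..<deg u}"]) auto

lemma whiteC: assumes v: "v \<in> V" "\<not> col v" shows "nb v (fp v) \<in> Cs"
proof -
  let ?c = "nb v (fp v)" and ?i = "bp v (fp v)"
  have c: "?c \<in> V" "col ?c" using fpV fp_col v by auto
  have "?i < deg ?c" "nb ?c ?i = v" "bp ?c ?i = fp v" using nbV[OF v(1) fp_lt[OF v(1)]] by auto
  then have "?i \<in> {i. i < deg ?c \<and> P1 ?c i}" using v by (auto simp: P1_def)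
  then have "0 < n1 ?c" unfolding n1_def using A1_fin card_gt_0_iff by blast
  then show ?thesis using c by (simp add: Cs_def)
qed

lemma cen_in: assumes "v \<in> V" shows "cen v \<in> Cs"
proof (cases "col v")
  case True
  show ?thesis
  proof (cases "0 < n1 v")
    case True then show ?thesis using \<open>col v\<close> assms by (simp add: cen_def Cs_def)
  next
    case False
    have "nb v (fp v) \<in> V" "\<not> col (nb v (fp v))" using fpV fp_col assms True by auto
    then show ?thesis using whiteC False True by (simp add: cen_def)
  qed
next
  case False then show ?thesis using whiteC assms by (simp add: cen_def)
qed

lemma E_Cs: "c \<in> Cs \<Longrightarrow> E c = (if dec c then 1 else 2)" by (simp add: Cs_def E_def)

lemma inD_simp: assumes "v \<in> V"
  shows "inD v = (if col v \<and> 0 < n1 v then \<not> dec v else if col v then \<not> dec (cen v) else dec (cen v))"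
proof -
  have "cen v \<in> Cs" using cen_in assms .
  then show ?thesis using assms fp_col[OF assms] unfolding inD_def
    by (auto simp: cen_def E_Cs split: if_splits)
qed

lemma cen_Cs: "c \<in> Cs \<Longrightarrow> cen c = c" by (simp add: Cs_def cen_def)

lemma A1_nonempty: "c \<in> Cs \<Longrightarrow> \<exists>i. i < deg c \<and> P1 c i"
  by (simp add: Cs_def n1_def card_gt_0_iff)

lemma P1_cen: "c \<in> V \<Longrightarrow> i < deg c \<Longrightarrow> P1 c i \<Longrightarrow> nb c i \<in> V \<and> \<not> col (nb c i) \<and> cen (nb c i) = c"
  using nbV[of c i] by (auto simp: P1_def cen_def)

lemma dominating: "dominating V deg p {v \<in> V. inD v}"
  unfolding dominating_def
proof (intro conjI ballI)
  fix v assume v: "v \<in> V"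
  show "v \<in> {v \<in> V. inD v} \<or> (\<exists>u\<in>{v \<in> V. inD v}. adj V deg p v u)"
  proof (cases "inD v")
    case True then show ?thesis using v by simp
  next
    case False
    have "\<exists>i<deg v. nb v i \<in> V \<and> inD (nb v i)"
    proof (cases "col v \<and> 0 < n1 v")
      case True
      then have vc: "v \<in> Cs" using v by (simp add: Cs_def)
      then obtain i where i: "i < deg v" "P1 v i" using A1_nonempty by blast
      have "dec v" using False True inD_simp v by simp
      then show ?thesis using i P1_cen[OF v i] inD_simp by auto
    next
      case F2: False
      show ?thesis
      proof (cases "col v")
        case True
        let ?w = "nb v (fp v)"
        have w: "?w \<in> V" "\<not> col ?w" using fpV fp_col v True by auto
        have "cen ?w = cen v" using True F2 w by (simp add: cen_def)
        moreover have "dec (cen v)" using False True F2 inD_simp v by simp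
        ultimately have "inD ?w" using inD_simp[OF w(1)] w by simp
        then show ?thesis using w fp_lt v by blast
      next
        case F3: False
        let ?c = "nb v (fp v)"
        have c: "?c \<in> Cs" using whiteC v F3 by simp
        have "\<not> dec ?c" using False F3 inD_simp v by (simp add: cen_def)
        then have "inD ?c" using c inD_simp[of ?c] by (simp add: Cs_def)
        then show ?thesis using c fp_lt v by (auto simp: Cs_def)
      qed
    qed
    then show ?thesis using adjI v by blast
  qed
qed auto

end



context S2
begin

definition T where "T c = {v \<in> V. cen v = c}"
definition L1 where "L1 c = {w \<in> V. \<not> col w \<and> cen w = c}"
definition L2 where "L2 c = {b \<in> V. col b \<and> n1 b = 0 \<and> cen b = c}"
definition L2w where "L2w w = {b \<in> V. col b \<and> n1 b = 0 \<and> nb b (fp b) = w}"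
definition K where "K w = {i. i < deg w \<and> col (nb w i) \<and> n1 (nb w i) = 0 \<and> bp w i = fp (nb w i)}"

lemma card_L1: assumes c: "c \<in> Cs" shows "card (L1 c) = n1 c"
proof -
  have cV: "c \<in> V" using c by (simp add: Cs_def)
  have "bij_betw (nb c) {i. i < deg c \<and> P1 c i} (L1 c)"
  proof (rule bij_betw_imageI)
    show "inj_on (nb c) {i. i < deg c \<and> P1 c i}" using portinj[OF cV] by (auto simp: inj_on_def)
    show "nb c ` {i. i < deg c \<and> P1 c i} = L1 c"
    proof
      show "nb c ` {i. i < deg c \<and> P1 c i} \<subseteq> L1 c" using P1_cen[OF cV] by (auto simp: L1_def)
      show "L1 c \<subseteq> nb c ` {i. i < deg c \<and> P1 c i}"
      proof
        fix w assume "w \<in> L1 c"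
        then have w: "w \<in> V" "\<not> col w" "nb w (fp w) = c" by (auto simp: L1_def cen_def)
        let ?i = "bp w (fp w)"
        have "?i < deg c" "nb c ?i = w" "bp c ?i = fp w" using nbV[OF w(1) fp_lt[OF w(1)]] w(3) by auto
        then show "w \<in> nb c ` {i. i < deg c \<and> P1 c i}" using w by (auto simp: P1_def image_iff)
      qed
    qed
  qed
  then show ?thesis by (simp add: bij_betw_same_card n1_def)
qed

lemma card_L2w: assumes w: "w \<in> V" shows "card (L2w w) = kk w"
proof -
  have "bij_betw (nb w) (K w) (L2w w)"
  proof (rule bij_betw_imageI)
    show "inj_on (nb w) (K w)" using portinj[OF w] by (auto simp: inj_on_def K_def)
    show "nb w ` K w = L2w w"
    proof
      show "nb w ` K w \<subseteq> L2w w"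
      proof
        fix b assume "b \<in> nb w ` K w"
        then obtain i where i: "i < deg w" "col (nb w i)" "n1 (nb w i) = 0" "bp w i = fp (nb w i)" "b = nb w i"
          by (auto simp: K_def)
        have "nb (nb w i) (bp w i) = w" using nb_back[OF w i(1)] .
        then show "b \<in> L2w w" using i nbV[OF w i(1)] by (simp add: L2w_def)
      qed
      show "L2w w \<subseteq> nb w ` K w"
      proof
        fix b assume "b \<in> L2w w"
        then have b: "b \<in> V" "col b" "n1 b = 0" "nb b (fp b) = w" by (auto simp: L2w_def)
        let ?i = "bp b (fp b)"
        have "?i < deg w" "nb w ?i = b" "bp w ?i = fp b" using nbV[OF b(1) fp_lt[OF b(1)]] b(4) by auto
        then show "b \<in> nb w ` K w" using b by (auto simp: K_def image_iff)
      qed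
    qed
  qed
  then show ?thesis by (simp add: bij_betw_same_card kk_def K_def)
qed

lemma L2_UN: assumes c: "c \<in> Cs" shows "L2 c = (\<Union>w\<in>L1 c. L2w w)"
proof
  show "L2 c \<subseteq> (\<Union>w\<in>L1 c. L2w w)"
  proof
    fix b assume "b \<in> L2 c"
    then have b: "b \<in> V" "col b" "n1 b = 0" "cen b = c" by (auto simp: L2_def)
    let ?w = "nb b (fp b)"
    have "?w \<in> V" "\<not> col ?w" using fpV fp_col b by auto
    moreover have "cen ?w = c" using b \<open>\<not> col ?w\<close> by (simp add: cen_def)
    ultimately show "b \<in> (\<Union>w\<in>L1 c. L2w w)" using b by (auto simp: L1_def L2w_def)
  qed
  show "(\<Union>w\<in>L1 c. L2w w) \<subseteq> L2 c"
    by (auto simp: L1_def L2w_def L2_def cen_def)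
qed

lemma card_L2: assumes c: "c \<in> Cs" shows "card (L2 c) = n2 c"
proof -
  have cV: "c \<in> V" using c by (simp add: Cs_def)
  have fin1: "finite (L1 c)" using finV by (simp add: L1_def)
  have "card (L2 c) = (\<Sum>w\<in>L1 c. card (L2w w))"
    unfolding L2_UN[OF c]
    by (rule card_UN_disjoint) (use fin1 finV in \<open>auto simp: L2w_def\<close>)
  also have "\<dots> = (\<Sum>w\<in>L1 c. kk w)" by (rule sum.cong) (auto simp: L1_def card_L2w)
  also have "\<dots> = (\<Sum>i\<in>{i. i < deg c \<and> P1 c i}. kk (nb c i))"
  proof (rule sum.reindex_bij_betw[symmetric])
    have "inj_on (nb c) {i. i < deg c \<and> P1 c i}" using portinj[OF cV] by (auto simp: inj_on_def)
    moreover have "nb c ` {i. i < deg c \<and> P1 c i} = L1 c"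
    proof
      show "nb c ` {i. i < deg c \<and> P1 c i} \<subseteq> L1 c" using P1_cen[OF cV] by (auto simp: L1_def)
      show "L1 c \<subseteq> nb c ` {i. i < deg c \<and> P1 c i}"
      proof
        fix w assume "w \<in> L1 c"
        then have w: "w \<in> V" "\<not> col w" "nb w (fp w) = c" by (auto simp: L1_def cen_def)
        let ?i = "bp w (fp w)"
        have "?i < deg c" "nb c ?i = w" "bp c ?i = fp w" using nbV[OF w(1) fp_lt[OF w(1)]] w(3) by auto
        then show "w \<in> nb c ` {i. i < deg c \<and> P1 c i}" using w by (auto simp: P1_def image_iff)
      qed
    qed
    ultimately show "bij_betw (nb c) {i. i < deg c \<and> P1 c i} (L1 c)" by (simp add: bij_betw_def)
  qed
  finally show ?thesis by (simp add: n2_def)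
qed

lemma T_split: assumes c: "c \<in> Cs" shows "T c = insert c (L1 c \<union> L2 c)"
  using c cen_Cs[OF c] by (auto simp: T_def L1_def L2_def Cs_def cen_def)

lemma card_T: assumes c: "c \<in> Cs" shows "card (T c) = Suc (n1 c + n2 c)"
proof -
  have f: "finite (L1 c)" "finite (L2 c)" using finV by (auto simp: L1_def L2_def)
  have "c \<notin> L1 c \<union> L2 c" using c by (auto simp: L1_def L2_def Cs_def)
  moreover have "L1 c \<inter> L2 c = {}" by (auto simp: L1_def L2_def)
  ultimately show ?thesis using f card_L1[OF c] card_L2[OF c] T_split[OF c]
    by (simp add: card_Un_disjoint)
qed

lemma DT: assumes c: "c \<in> Cs"
  shows "{v \<in> V. inD v} \<inter> T c = (if dec c then L1 c else insert c (L2 c))"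
proof (rule set_eqI)
  fix v
  have cc: "col c" "0 < n1 c" using c by (auto simp: Cs_def)
  show "v \<in> {v \<in> V. inD v} \<inter> T c \<longleftrightarrow> v \<in> (if dec c then L1 c else insert c (L2 c))"
  proof (cases "v \<in> V \<and> cen v = c")
    case False
    moreover have "c \<in> V" "cen c = c" using c cen_Cs[OF c] by (auto simp: Cs_def)
    ultimately show ?thesis by (auto simp: T_def L1_def L2_def)
  next
    case True
    then have v: "v \<in> V" "cen v = c" by auto
    have iD: "inD v = (if col v \<and> 0 < n1 v then \<not> dec v else if col v then \<not> dec c else dec c)"
      using inD_simp[OF v(1)] v(2) by simp
    show ?thesis
    proof (cases "col v \<and> 0 < n1 v")
      case True
      then have "v = c" using v(2) by (simp add: cen_def)
      then show ?thesis using iD v True by (auto simp: T_def L1_def L2_def)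
    next
      case F: False
      show ?thesis
      proof (cases "col v")
        case True
        then have "v \<noteq> c" using F cc by auto
        then show ?thesis using iD v True F by (auto simp: T_def L1_def L2_def)
      next
        case False
        then have "v \<noteq> c" using cc by auto
        then show ?thesis using iD v False by (auto simp: T_def L1_def L2_def)
      qed
    qed
  qed
qed

lemma card_DT: assumes c: "c \<in> Cs" shows "2 * card ({v \<in> V. inD v} \<inter> T c) \<le> card (T c)"
proof -
  have f: "finite (L2 c)" using finV by (auto simp: L2_def)
  have "c \<notin> L2 c" using c by (auto simp: L2_def Cs_def)
  then show ?thesis using DT[OF c] card_T[OF c] card_L1[OF c] card_L2[OF c] f
    by (auto simp: dec_def)
qed

lemma half: "2 * card {v \<in> V. inD v} \<le> card V"
proof -
  let ?D = "{v \<in> V. inD v}"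
  have finC: "finite Cs" using finV by (simp add: Cs_def)
  have disj: "\<forall>i\<in>Cs. \<forall>j\<in>Cs. i \<noteq> j \<longrightarrow> T i \<inter> T j = {}" by (auto simp: T_def)
  have V: "V = (\<Union>c\<in>Cs. T c)" using cen_in by (auto simp: T_def)
  have D: "?D = (\<Union>c\<in>Cs. ?D \<inter> T c)" using V by blast
  have "card V = (\<Sum>c\<in>Cs. card (T c))"
    by (subst V, rule card_UN_disjoint) (use finC finV disj in \<open>auto simp: T_def\<close>)
  moreover have "card ?D = (\<Sum>c\<in>Cs. card (?D \<inter> T c))"
    by (subst D, rule card_UN_disjoint) (use finC finV disj in \<open>auto simp: T_def\<close>)
  ultimately show ?thesis using card_DT
    by (simp add: sum_distrib_left sum_mono)
qed

lemma dom_bound: assumes "dominating V deg p Ds" and that: "\<forall>v\<in>V. deg v \<le> \<Delta>'" shows "card V \<le> (Suc \<Delta>') * card Ds"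
proof -
  let ?N = "\<lambda>u. insert u (nb u ` {..<deg u})"
  have DsV: "Ds \<subseteq> V" using assms by (simp add: dominating_def)
  have finDs: "finite Ds" using DsV finV finite_subset by blast
  have sub: "V \<subseteq> (\<Union>u\<in>Ds. ?N u)"
  proof
    fix v assume v: "v \<in> V"
    then have "v \<in> Ds \<or> (\<exists>u\<in>Ds. adj V deg p v u)" using assms by (simp add: dominating_def)
    then show "v \<in> (\<Union>u\<in>Ds. ?N u)"
    proof
      assume "v \<in> Ds" then show ?thesis by blast
    next
      assume "\<exists>u\<in>Ds. adj V deg p v u"
      then obtain u i where u: "u \<in> Ds" "i < deg v" "nb v i = u" by (auto simp: adj_def)
      have "bp v i < deg u" "nb u (bp v i) = v" using nbV[OF v u(2)] u(3) by auto
      then have "v \<in> ?N u" by (metis imageI insertCI lessThan_iff)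
      then show ?thesis using u(1) by blast
    qed
  qed
  have fin: "finite (\<Union>u\<in>Ds. ?N u)" using finDs by blast
  have "card V \<le> card (\<Union>u\<in>Ds. ?N u)" by (rule card_mono[OF fin sub])
  also have "\<dots> \<le> (\<Sum>u\<in>Ds. card (?N u))" by (rule card_UN_le[OF finDs])
  also have "\<dots> \<le> (\<Sum>u\<in>Ds. Suc \<Delta>')"
  proof (rule sum_mono)
    fix u assume "u \<in> Ds"
    then have du: "deg u \<le> \<Delta>'" using that DsV by auto
    have "card (?N u) \<le> Suc (card (nb u ` {..<deg u}))" by (simp add: card_insert_if)
    also have "card (nb u ` {..<deg u}) \<le> deg u" using card_image_le[of "{..<deg u}" "nb u"] by simp
    finally show "card (?N u) \<le> Suc \<Delta>'" using du by simp
  qed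
  finally show ?thesis by (simp add: mult.commute)
qed

end


lemma (in S2) D_eq: "alg_output alg V deg p col = {v \<in> V. inD v}"
proof -
  have "\<And>v. v \<in> V \<Longrightarrow> outH (h 6 v) = inD v"
    using out_eq fp_lt fpV by blast
  moreover have "rounds alg = 6" "out alg = (\<lambda>s. outH (list_decode s))" by (simp_all add: alg_def)
  ultimately show ?thesis
    by (auto simp: alg_output_def run_hist)
qed

theorem theorem6:
  fixes \<Delta> :: nat
  assumes "\<Delta> \<ge> 1"
  shows "\<exists>A :: pn_alg. \<forall>V deg p col.
           port_graph V deg p \<and> no_isolated V deg \<and> max_degree_le V deg \<Delta> \<and>
           weak_2_colouring V deg p col \<longrightarrow>
             (let D = alg_output A V deg p col in
                dominating V deg p D \<and>
                real (card D) \<le> real (card V) / 2 \<and>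
                (\<forall>Ds. min_dominating V deg p Ds \<longrightarrow>
                   real (card D) \<le> (real \<Delta> + 1) / 2 * real (card Ds)))"
proof (intro exI allI impI)
  fix V deg p col
  assume H: "port_graph V deg p \<and> no_isolated V deg \<and> max_degree_le V deg \<Delta> \<and> weak_2_colouring V deg p col"
  interpret S2 V deg p col using H by unfold_locales auto
  have md: "\<forall>v\<in>V. deg v \<le> \<Delta>" using H by (simp add: max_degree_le_def)
  have h2: "real (card {v \<in> V. inD v}) \<le> real (card V) / 2"
    using half by linarith
  have h3: "real (card {v \<in> V. inD v}) \<le> (real \<Delta> + 1) / 2 * real (card Ds)"
    if "min_dominating V deg p Ds" for Ds
  proof -
    have "card V \<le> Suc \<Delta> * card Ds" using dom_bound[OF _ md] that by (simp add: min_dominating_def)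
    then have "real (card V) \<le> (real \<Delta> + 1) * real (card Ds)"
      by (metis of_nat_Suc of_nat_le_iff of_nat_mult add.commute)
    then show ?thesis using h2 by linarith
  qed
  show "let D = alg_output alg V deg p col in
                dominating V deg p D \<and>
                real (card D) \<le> real (card V) / 2 \<and>
                (\<forall>Ds. min_dominating V deg p Ds \<longrightarrow>
                   real (card D) \<le> (real \<Delta> + 1) / 2 * real (card Ds))"
    unfolding D_eq Let_def using dominating h2 h3 by blast
qed

end
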